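(* Consider the two-user two-hop MAC with $n$ relays as in the context. Then (i) $\bigcup_{\mathbf B\text{ feasible},\,\mathbf B\mathbf h_1\neq 0}\mathcal R^{out}_1(\mathbf B)=\bigcup_{\theta\in[\alpha,\beta]}\mathcal R(\theta)$, i.e. it suffices to take $\theta\in[\alpha,\beta]$; and (ii) if $\arccos(\hat{\mathbf h}_{01}^T\hat{\mathbf h}_{02})\le\pi/4$, then $\bigcup_{\theta\in[\alpha,\beta]}\mathcal R(\theta)$ is a convex set (so it equals its convex hull).
   Context: Two sources $S_1,S_2$ with Gaussian inputs of powers $P_{S_1},P_{S_2}>0$, $n$ relays, one destination. Relay $k$ receives $y_k=h_{S_1,k}x_{S_1}+h_{S_2,k}x_{S_2}+z_k$ and sends $\beta_k y_k$; the destination receives $y_D=\mathbf h_1^T\mathbf B\mathbf h_{01}x_{S_1}+\mathbf h_1^T\mathbf B\mathbf h_{02}x_{S_2}+\mathbf h_1^T\mathbf B\mathbf z_1+z_D$, where $\mathbf h_{0i}=(h_{S_i,k})_k\in\mathbb R^n$, $\mathbf h_1=(h_{k,D})_k\in\mathbb R^n$ have positive entries, $\mathbf B=\mathrm{diag}(\beta_1,\dots,\beta_n)$ with real gains, and noises are i.i.d. $\mathcal N(0,1)$. $\mathbf B$ is feasible if $|\beta_k|\le\beta_k^{Up}:=\sqrt{P_k^{Up}/(1+h_{S_1,k}^2P_{S_1}+h_{S_2,k}^2P_{S_2})}$ for all $k$. Let $\mathcal C(x)=\frac12\log_2(1+x)$ and $\mathbf A=P_{S_1}\mathbf h_{01}\mathbf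 h_{01}^T+P_{S_2}\mathbf h_{02}\mathbf h_{02}^T$. For $\mathbf B$ with $\mathbf B\mathbf h_1\ne0$, $\mathcal R^{out}_1(\mathbf B)$ is the set of $(R_1,R_2)\ge0$ with $R_1\le\mathcal C\big((\mathbf h_1^T\mathbf B\mathbf h_{01})^2P_{S_1}/\mathbf h_1^T\mathbf B^2\mathbf h_1\big)$, $R_2\le\mathcal C\big((\mathbf h_1^T\mathbf B\mathbf h_{02})^2P_{S_2}/\mathbf h_1^T\mathbf B^2\mathbf h_1\big)$, $R_1+R_2\le\mathcal C\big(\mathbf h_1^T\mathbf B\mathbf A\mathbf B\mathbf h_1/\mathbf h_1^T\mathbf B^2\mathbf h_1\big)$. Let $\hat{\mathbf h}_{0i}=\mathbf h_{0i}/\|\mathbf h_{0i}\|$ and $P_i=\|\mathbf h_{0i}\|^2P_{S_i}$. Fix orthonormal $\mathbf u_1,\mathbf u_2\in\mathbb R^n$ and angles $0\le\alpha\le\beta\le\pi/2$ with $\hat{\mathbf h}_{01}=\cos\alpha\,\mathbf u_1+\sin\alpha\,\mathbf u_2$, $\hat{\mathbf h}_{02}=\cos\beta\,\mathbf u_1+\sin\beta\,\mathbf u_2$. For $\theta\in\mathbb R$ let $\phi_1(\theta)=P_1\cos^2(\theta-\alpha)$, $\phi_2(\theta)=P_2\cos^2(\theta-\beta)$, $\phi=\phi_1+\phi_2$, and $\mathcal R(\theta)=\{(R_1,R_2)\ge0:R_1\le\mathcal C(\phi_1(\theta)),R_2\le\mathcal C(\phi_2(\theta)),R_1+R_2\le\mathcal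 C(\phi(\theta))\}$. *)

theory Defs
  imports "HOL-Analysis.Analysis"
begin

definition Cap :: "real \<Rightarrow> real" where
  "Cap x = (1/2) * log 2 (1 + x)"

definition diagm :: "real ^ 'n \<Rightarrow> real ^ 'n ^ 'n" where
  "diagm b = (\<chi> i j. if i = j then b $ i else 0)"

definition outer :: "real ^ 'n \<Rightarrow> real ^ 'n \<Rightarrow> real ^ 'n ^ 'n" where
  "outer x y = (\<chi> i j. x $ i * y $ j)"

definition betaUp :: "real \<Rightarrow> real \<Rightarrow> real ^ 'n \<Rightarrow> real ^ 'n \<Rightarrow> real ^ 'n \<Rightarrow> 'n \<Rightarrow> real" where
  "betaUp PS1 PS2 h01 h02 PUp k =
     sqrt (PUp $ k / (1 + (h01 $ k)\<^sup>2 * PS1 + (h02 $ k)\<^sup>2 * PS2))"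

definition feasible :: "real \<Rightarrow> real \<Rightarrow> real ^ 'n \<Rightarrow> real ^ 'n \<Rightarrow> real ^ 'n \<Rightarrow> real ^ 'n \<Rightarrow> bool" where
  "feasible PS1 PS2 h01 h02 PUp b \<longleftrightarrow> (\<forall>k. \<bar>b $ k\<bar> \<le> betaUp PS1 PS2 h01 h02 PUp k)"

definition Amat :: "real \<Rightarrow> real \<Rightarrow> real ^ 'n \<Rightarrow> real ^ 'n \<Rightarrow> real ^ 'n ^ 'n" where
  "Amat PS1 PS2 h01 h02 = PS1 *\<^sub>R outer h01 h01 + PS2 *\<^sub>R outer h02 h02"

definition Rout1 :: "real \<Rightarrow> real \<Rightarrow> real ^ 'n \<Rightarrow> real ^ 'n \<Rightarrow> real ^ 'n \<Rightarrow> real ^ 'n \<Rightarrow> (real \<times> real) set" where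
  "Rout1 PS1 PS2 h01 h02 h1 b =
    (let B = diagm b; den = h1 \<bullet> (B *v (B *v h1)) in
     {(R1, R2). 0 \<le> R1 \<and> 0 \<le> R2 \<and>
        R1 \<le> Cap ((h1 \<bullet> (B *v h01))\<^sup>2 * PS1 / den) \<and>
        R2 \<le> Cap ((h1 \<bullet> (B *v h02))\<^sup>2 * PS2 / den) \<and>
        R1 + R2 \<le> Cap ((h1 \<bullet> (B *v (Amat PS1 PS2 h01 h02 *v (B *v h1)))) / den)})"

definition Rtheta :: "real \<Rightarrow> real \<Rightarrow> real \<Rightarrow> real \<Rightarrow> real \<Rightarrow> (real \<times> real) set" where
  "Rtheta P1 P2 \<alpha> \<beta> \<theta> =
    (let \<phi>1 = P1 * (cos (\<theta> - \<alpha>))\<^sup>2; \<phi>2 = P2 * (cos (\<theta> - \<beta>))\<^sup>2 in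
     {(R1, R2). 0 \<le> R1 \<and> 0 \<le> R2 \<and> R1 \<le> Cap \<phi>1 \<and> R2 \<le> Cap \<phi>2 \<and>
        R1 + R2 \<le> Cap (\<phi>1 + \<phi>2)})"

end

theory Submission imports Defs begin


definition G :: "real \<Rightarrow> real \<Rightarrow> (real \<times> real) set" where
  "G p q = {(R1,R2). 0 \<le> R1 \<and> 0 \<le> R2 \<and> R1 \<le> Cap p \<and> R2 \<le> Cap q \<and> R1 + R2 \<le> Cap (p + q)}"

lemma Rtheta_G: "Rtheta P1 P2 \<alpha> \<beta> \<theta> = G (P1*(cos(\<theta>-\<alpha>))\<^sup>2) (P2*(cos(\<theta>-\<beta>))\<^sup>2)"
  by (simp add: Rtheta_def G_def Let_def)

lemma diagm_mv: fixes b x :: "real^'n" shows "diagm b *v x = (\<chi> i. b$i * x$i)"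
proof -
  have "(\<Sum>j\<in>UNIV. (if i = j then c else 0) * f j) = c * f i" for i :: 'n and c :: real and f
  proof -
    have "(\<Sum>j\<in>UNIV. (if i = j then c else 0) * f j) = (\<Sum>j\<in>UNIV. (if i = j then c * f j else 0))"
      by (rule sum.cong) auto
    also have "\<dots> = c * f i" by (simp add: sum.delta')
    finally show ?thesis .
  qed
  then show ?thesis by (simp add: vec_eq_iff diagm_def matrix_vector_mult_def)
qed

lemma inner_diagm: "h \<bullet> (diagm b *v x) = (diagm b *v h) \<bullet> x"
  by (simp add: diagm_mv inner_vec_def algebra_simps)

lemma Amat_mv: "Amat PS1 PS2 h01 h02 *v z = (PS1*(h01\<bullet>z)) *\<^sub>R h01 + (PS2*(h02\<bullet>z)) *\<^sub>R h02"
  unfolding Amat_def outer_def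
  by (simp add: vec_eq_iff matrix_vector_mult_def inner_vec_def sum_distrib_left sum_distrib_right
       sum.distrib algebra_simps)

lemma Rout1_G:
  assumes "w = diagm b *v h1"
  shows "Rout1 PS1 PS2 h01 h02 h1 b = G (PS1*(w\<bullet>h01)\<^sup>2/(w\<bullet>w)) (PS2*(w\<bullet>h02)\<^sup>2/(w\<bullet>w))"
proof -
  have 1: "h1 \<bullet> (diagm b *v x) = w \<bullet> x" for x using assms inner_diagm by metis
  have 2: "w \<bullet> (Amat PS1 PS2 h01 h02 *v w) = PS1*(w\<bullet>h01)\<^sup>2 + PS2*(w\<bullet>h02)\<^sup>2"
    by (simp add: Amat_mv inner_commute power2_eq_square algebra_simps)
  show ?thesis unfolding Rout1_def Let_def 1 2 G_def by (simp add: 2 add_divide_distrib ac_simps assms[symmetric])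
qed



lemma cos2_le:
  fixes x y :: real
  assumes "0 \<le> x" "x \<le> pi/2" "x \<le> y" "y \<le> pi - x"
  shows "(cos y)\<^sup>2 \<le> (cos x)\<^sup>2"
proof (cases "y \<le> pi/2")
  case True
  have a: "0 \<le> cos y" by (rule cos_ge_zero) (use True assms pi_gt_zero in linarith)+
  have b: "cos y \<le> cos x" by (rule cos_monotone_0_pi_le) (use assms True in linarith)+
  show ?thesis by (rule power_mono[OF b a])
next
  case False
  have e: "(cos y)\<^sup>2 = (cos (pi - y))\<^sup>2" by simp
  have a: "0 \<le> cos (pi - y)" by (rule cos_ge_zero) (use False assms in linarith)+
  have b: "cos (pi - y) \<le> cos x" by (rule cos_monotone_0_pi_le) (use False assms in linarith)+
  have "(cos (pi - y))\<^sup>2 \<le> (cos x)\<^sup>2" by (rule power_mono[OF b a])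
  then show ?thesis using e by linarith
qed

lemma cos2_periodic: "(cos ((x::real) + of_int k * pi))\<^sup>2 = (cos x)\<^sup>2"
proof -
  have s: "sin (of_int k * pi) = 0" using sin_npi_int[of k] by (simp add: mult.commute)
  have c: "(cos (of_int k * pi))\<^sup>2 = 1" using sin_cos_squared_add[of "of_int k * pi"] s by simp
  show ?thesis by (simp add: cos_add s power_mult_distrib c)
qed

lemma cos2_le1: "(cos (x::real))\<^sup>2 \<le> 1"
  using abs_cos_le_one[of x] by (simp add: abs_square_le_1)

lemma dom_base:
  fixes d s :: real
  assumes d: "0 \<le> d" "d \<le> pi/2" and s: "0 \<le> s" "s < pi"
  shows "\<exists>t\<in>{0..d}. (cos s)\<^sup>2 \<le> (cos t)\<^sup>2 \<and> (cos (s-d))\<^sup>2 \<le> (cos (t-d))\<^sup>2"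
proof -
  consider "s \<le> d" | "d < s" "s \<le> pi/2" | "pi/2 < s" "pi - s \<le> d" | "pi/2 < s" "d < pi - s" by linarith
  then show ?thesis
  proof cases
    case 1
    have "s \<in> {0..d}" using 1 s by simp
    then show ?thesis by (intro bexI[of _ s]) simp_all
  next
    case 2
    have "(cos s)\<^sup>2 \<le> (cos d)\<^sup>2" using 2 d s by (intro cos2_le) linarith+
    moreover have "(cos (s-d))\<^sup>2 \<le> (cos (d-d))\<^sup>2" using cos2_le1[of "s-d"] by simp
    moreover have "d \<in> {0..d}" using d by simp
    ultimately show ?thesis by (intro bexI[of _ d]) simp_all
  next
    case 3
    define s2 where "s2 = pi - s"
    have a: "(cos s)\<^sup>2 = (cos s2)\<^sup>2" unfolding s2_def by simp
    have "s - d = pi - (s2 + d)" unfolding s2_def by simp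
    then have b: "cos (s - d) = - cos (s2 + d)" by (metis cos_pi_minus)
    have "(cos (s2 + d))\<^sup>2 \<le> (cos (d - s2))\<^sup>2" using 3 d s unfolding s2_def by (intro cos2_le) linarith+
    moreover have "cos (s2 - d) = cos (d - s2)" by (metis cos_minus minus_diff_eq)
    moreover have "pi - s \<in> {0..d}" using 3 s by simp
    ultimately show ?thesis using a b unfolding s2_def by (intro bexI[of _ "pi - s"] conjI) simp_all
  next
    case 4
    have "(cos s)\<^sup>2 = (cos (pi - s))\<^sup>2" by simp
    also have "\<dots> \<le> (cos d)\<^sup>2" using 4 d s by (intro cos2_le) linarith+
    finally have "(cos s)\<^sup>2 \<le> (cos d)\<^sup>2" .
    moreover have "(cos (s-d))\<^sup>2 \<le> (cos (d-d))\<^sup>2" using cos2_le1[of "s-d"] by simp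
    moreover have "d \<in> {0..d}" using d by simp
    ultimately show ?thesis by (intro bexI[of _ d]) simp_all
  qed
qed

lemma dom:
  fixes d s :: real
  assumes d: "0 \<le> d" "d \<le> pi/2"
  shows "\<exists>t\<in>{0..d}. (cos s)\<^sup>2 \<le> (cos t)\<^sup>2 \<and> (cos (s-d))\<^sup>2 \<le> (cos (t-d))\<^sup>2"
proof -
  define k where "k = \<lfloor>s / pi\<rfloor>"
  define s' where "s' = s - of_int k * pi"
  have "of_int k * pi \<le> s" unfolding k_def by (rule floor_divide_lower) simp
  moreover have "s < (of_int k + 1) * pi" unfolding k_def by (rule floor_divide_upper) simp
  ultimately have "0 \<le> s'" "s' < pi" unfolding s'_def by (simp_all add: distrib_right)
  from dom_base[OF d this] obtain t where t: "t \<in> {0..d}" "(cos s')\<^sup>2 \<le> (cos t)\<^sup>2"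
      "(cos (s'-d))\<^sup>2 \<le> (cos (t-d))\<^sup>2" by blast
  have "(cos s)\<^sup>2 = (cos s')\<^sup>2" using cos2_periodic[of s' k] unfolding s'_def by simp
  moreover have "(cos (s-d))\<^sup>2 = (cos (s'-d))\<^sup>2"
  proof -
    have "s - d = (s' - d) + of_int k * pi" unfolding s'_def by simp
    then show ?thesis using cos2_periodic[of "s'-d" k] by metis
  qed
  ultimately show ?thesis using t by auto
qed


lemma Cap_mono: "0 \<le> x \<Longrightarrow> x \<le> y \<Longrightarrow> Cap x \<le> Cap y"
  unfolding Cap_def by simp

lemma Cap_concave: "concave_on {0..} Cap"
  unfolding Cap_def
  by (intro f''_le0_imp_concave derivative_eq_intros | simp)+

lemma cos2_concave: "concave_on {-(pi/4)..pi/4} (\<lambda>x. (cos x)\<^sup>2)"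
proof (rule f''_le0_imp_concave[where f'="\<lambda>x. 2 * cos x * (- sin x)" and f''="\<lambda>x. -2 * ((cos x)\<^sup>2 - (sin x)\<^sup>2)"])
  fix x :: real assume x: "x \<in> {-(pi/4)..pi/4}"
  show "((\<lambda>x. (cos x)\<^sup>2) has_real_derivative 2 * cos x * (- sin x)) (at x)"
    by (rule derivative_eq_intros | simp)+
  show "((\<lambda>x. 2 * cos x * (- sin x)) has_real_derivative -2 * ((cos x)\<^sup>2 - (sin x)\<^sup>2)) (at x)"
    by (rule derivative_eq_intros | simp add: power2_eq_square algebra_simps)+
  have "0 \<le> cos (2*x)" using x by (intro cos_ge_zero) auto
  then show "-2 * ((cos x)\<^sup>2 - (sin x)\<^sup>2) \<le> 0" by (simp add: cos_double)
qed auto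

lemma G_mono:
  assumes "0 \<le> p" "p \<le> p'" "0 \<le> q" "q \<le> q'"
  shows "G p q \<subseteq> G p' q'"
proof -
  have "Cap p \<le> Cap p'" "Cap q \<le> Cap q'" "Cap (p+q) \<le> Cap (p'+q')"
    using assms by (auto intro!: Cap_mono)
  then show ?thesis unfolding G_def by auto
qed

lemma key:
  fixes u v :: real
  assumes "0 \<le> u" "0 \<le> v" "u + v = 1" "0 \<le> a1" "0 \<le> a2" "x1 \<le> Cap a1" "x2 \<le> Cap a2"
    "u * a1 + v * a2 \<le> a"
  shows "u * x1 + v * x2 \<le> Cap a"
proof -
  have "u * x1 + v * x2 \<le> u * Cap a1 + v * Cap a2"
    using assms by (intro add_mono mult_left_mono) auto
  also have "\<dots> \<le> Cap (u * a1 + v * a2)"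
  proof -
    have "Cap ((1-v) *\<^sub>R a1 + v *\<^sub>R a2) \<ge> (1-v) * Cap a1 + v * Cap a2"
      by (rule concave_onD[OF Cap_concave]) (use assms in auto)
    moreover have "u = 1 - v" using assms by simp
    ultimately show ?thesis by simp
  qed
  also have "\<dots> \<le> Cap a" using assms by (intro Cap_mono) auto
  finally show ?thesis .
qed

lemma phi_conc:
  fixes u v P z1 z2 :: real
  assumes "z1 \<in> {-(pi/4)..pi/4}" "z2 \<in> {-(pi/4)..pi/4}" "0 \<le> u" "0 \<le> v" "u + v = 1" "0 \<le> P"
  shows "u * (P * (cos z1)\<^sup>2) + v * (P * (cos z2)\<^sup>2) \<le> P * (cos (u * z1 + v * z2))\<^sup>2"
proof -
  have "u * (cos z1)\<^sup>2 + v * (cos z2)\<^sup>2 \<le> (cos (u * z1 + v * z2))\<^sup>2"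
  proof -
    have "(cos ((1-v) *\<^sub>R z1 + v *\<^sub>R z2))\<^sup>2 \<ge> (1-v) * (cos z1)\<^sup>2 + v * (cos z2)\<^sup>2"
      by (rule concave_onD[OF cos2_concave]) (use assms in auto)
    moreover have "u = 1 - v" using assms by simp
    ultimately show ?thesis by simp
  qed
  then have "P * (u * (cos z1)\<^sup>2 + v * (cos z2)\<^sup>2) \<le> P * (cos (u * z1 + v * z2))\<^sup>2"
    using assms by (intro mult_left_mono) auto
  then show ?thesis by (simp add: algebra_simps)
qed

lemma bessel:
  fixes w u1 u2 :: "'a::real_inner"
  assumes "norm u1 = 1" "norm u2 = 1" "u1 \<bullet> u2 = 0"
  shows "(w \<bullet> u1)\<^sup>2 + (w \<bullet> u2)\<^sup>2 \<le> w \<bullet> w"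
proof -
  have u11: "u1 \<bullet> u1 = 1" "u2 \<bullet> u2 = 1" using assms by (simp_all add: dot_square_norm)
  have "0 \<le> (w - (w \<bullet> u1) *\<^sub>R u1 - (w \<bullet> u2) *\<^sub>R u2) \<bullet> (w - (w \<bullet> u1) *\<^sub>R u1 - (w \<bullet> u2) *\<^sub>R u2)"
    by simp
  also have "\<dots> = w \<bullet> w - (w \<bullet> u1)\<^sup>2 - (w \<bullet> u2)\<^sup>2"
    using u11 assms(3)
    by (simp add: inner_diff_left inner_diff_right inner_commute power2_eq_square algebra_simps)
  finally show ?thesis by simp
qed

lemma polar: fixes a b :: real shows "\<exists>r t. 0 \<le> r \<and> a = r * cos t \<and> b = r * sin t \<and> r\<^sup>2 = a\<^sup>2 + b\<^sup>2"
proof (cases "a\<^sup>2 + b\<^sup>2 = 0")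
  case True then have "a = 0 \<and> b = 0" by simp
  then show ?thesis by (intro exI[of _ 0]) auto
next
  case False
  define r where "r = sqrt (a\<^sup>2 + b\<^sup>2)"
  have nn: "0 < a\<^sup>2 + b\<^sup>2" using False by (simp add: less_le)
  have r0: "r > 0" unfolding r_def using nn by simp
  have r2: "r\<^sup>2 = a\<^sup>2 + b\<^sup>2" unfolding r_def using nn by simp
  have "(a/r)\<^sup>2 + (b/r)\<^sup>2 = (a\<^sup>2 + b\<^sup>2) / r\<^sup>2" by (simp add: power_divide add_divide_distrib)
  also have "\<dots> = 1" using r2 r0 by (metis div_self less_numeral_extra(3) zero_less_power)
  finally have "(a/r)\<^sup>2 + (b/r)\<^sup>2 = 1" .
  then obtain t where t: "a/r = cos t" "b/r = sin t" by (rule sincos_total_2pi)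
  have "a = r * cos t" using t(1) r0 by (simp add: divide_eq_eq mult.commute)
  moreover have "b = r * sin t" using t(2) r0 by (simp add: divide_eq_eq mult.commute)
  ultimately show ?thesis using r0 r2 by (intro exI[of _ r] exI[of _ t]) simp
qed

lemma dir_bound:
  fixes w u1 u2 e1 e2 :: "'a::real_inner"
  assumes "norm u1 = 1" "norm u2 = 1" "u1 \<bullet> u2 = 0"
    and e1: "e1 = cos \<alpha> *\<^sub>R u1 + sin \<alpha> *\<^sub>R u2" and e2: "e2 = cos \<beta> *\<^sub>R u1 + sin \<beta> *\<^sub>R u2"
  shows "\<exists>t. (w \<bullet> e1)\<^sup>2 \<le> (w \<bullet> w) * (cos (t - \<alpha>))\<^sup>2 \<and> (w \<bullet> e2)\<^sup>2 \<le> (w \<bullet> w) * (cos (t - \<beta>))\<^sup>2"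
proof -
  obtain r t where rt: "0 \<le> r" "w \<bullet> u1 = r * cos t" "w \<bullet> u2 = r * sin t"
      "r\<^sup>2 = (w \<bullet> u1)\<^sup>2 + (w \<bullet> u2)\<^sup>2" using polar by blast
  have rw: "r\<^sup>2 \<le> w \<bullet> w" using rt(4) bessel[OF assms(1-3)] by simp
  have E1: "w \<bullet> e1 = r * cos (t - \<alpha>)" using rt unfolding e1
    by (simp add: inner_add_right cos_diff algebra_simps)
  have E2: "w \<bullet> e2 = r * cos (t - \<beta>)" using rt unfolding e2
    by (simp add: inner_add_right cos_diff algebra_simps)
  have M: "r\<^sup>2 * (cos x)\<^sup>2 \<le> (w \<bullet> w) * (cos x)\<^sup>2" for x
    using rw by (intro mult_right_mono) auto
  have "(w \<bullet> e1)\<^sup>2 = r\<^sup>2 * (cos (t - \<alpha>))\<^sup>2" unfolding E1 by (rule power_mult_distrib)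
  moreover have "(w \<bullet> e2)\<^sup>2 = r\<^sup>2 * (cos (t - \<beta>))\<^sup>2" unfolding E2 by (rule power_mult_distrib)
  ultimately show ?thesis using M[of "t - \<alpha>"] M[of "t - \<beta>"] by (intro exI[of _ t]) simp
qed

lemma union_convex:
  fixes P1 P2 \<alpha> \<beta> :: real
  assumes P: "0 \<le> P1" "0 \<le> P2" and ab: "\<alpha> \<le> \<beta>" "\<beta> - \<alpha> \<le> pi/4"
  shows "convex (\<Union>\<theta>\<in>{\<alpha>..\<beta>}. G (P1*(cos(\<theta>-\<alpha>))\<^sup>2) (P2*(cos(\<theta>-\<beta>))\<^sup>2))"
  unfolding convex_def
proof (intro ballI allI impI)
  fix x y :: "real \<times> real" and u v :: real
  assume x: "x \<in> (\<Union>\<theta>\<in>{\<alpha>..\<beta>}. G (P1*(cos(\<theta>-\<alpha>))\<^sup>2) (P2*(cos(\<theta>-\<beta>))\<^sup>2))"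
    and y: "y \<in> (\<Union>\<theta>\<in>{\<alpha>..\<beta>}. G (P1*(cos(\<theta>-\<alpha>))\<^sup>2) (P2*(cos(\<theta>-\<beta>))\<^sup>2))"
    and uv: "0 \<le> u" "0 \<le> v" "u + v = 1"
  obtain t1 where t1: "t1 \<in> {\<alpha>..\<beta>}" "x \<in> G (P1*(cos(t1-\<alpha>))\<^sup>2) (P2*(cos(t1-\<beta>))\<^sup>2)" using x by blast
  obtain t2 where t2: "t2 \<in> {\<alpha>..\<beta>}" "y \<in> G (P1*(cos(t2-\<alpha>))\<^sup>2) (P2*(cos(t2-\<beta>))\<^sup>2)" using y by blast
  obtain x1 x2 where xx: "x = (x1, x2)" by (cases x)
  obtain y1 y2 where yy: "y = (y1, y2)" by (cases y)
  define t where "t = u * t1 + v * t2"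
  have "u * \<alpha> + v * \<alpha> \<le> u * t1 + v * t2" using t1 t2 uv by (intro add_mono mult_left_mono) auto
  moreover have "u * t1 + v * t2 \<le> u * \<beta> + v * \<beta>" using t1 t2 uv by (intro add_mono mult_left_mono) auto
  moreover have "u * \<alpha> + v * \<alpha> = \<alpha>" "u * \<beta> + v * \<beta> = \<beta>" using uv by (simp_all add: distrib_right[symmetric])
  ultimately have tI: "t \<in> {\<alpha>..\<beta>}" unfolding t_def by simp
  have "u * (t1 - \<alpha>) + v * (t2 - \<alpha>) = u * t1 + v * t2 - (u + v) * \<alpha>" by (simp add: algebra_simps)
  then have ta: "t - \<alpha> = u * (t1 - \<alpha>) + v * (t2 - \<alpha>)" unfolding t_def using uv(3) by simp
  have "u * (t1 - \<beta>) + v * (t2 - \<beta>) = u * t1 + v * t2 - (u + v) * \<beta>" by (simp add: algebra_simps)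
  then have tb: "t - \<beta> = u * (t1 - \<beta>) + v * (t2 - \<beta>)" unfolding t_def using uv(3) by simp
  have I1: "t1 - \<alpha> \<in> {-(pi/4)..pi/4}" "t2 - \<alpha> \<in> {-(pi/4)..pi/4}"
       "t1 - \<beta> \<in> {-(pi/4)..pi/4}" "t2 - \<beta> \<in> {-(pi/4)..pi/4}"
    using t1(1) t2(1) ab pi_gt_zero unfolding atLeastAtMost_iff by (intro conjI; linarith)+
  define f1 where "f1 = (\<lambda>s. P1*(cos(s-\<alpha>))\<^sup>2)"
  define f2 where "f2 = (\<lambda>s. P2*(cos(s-\<beta>))\<^sup>2)"
  have c1: "u * f1 t1 + v * f1 t2 \<le> f1 t" unfolding f1_def ta
    using phi_conc[OF I1(1,2) uv P(1)] by simp
  have c2: "u * f2 t1 + v * f2 t2 \<le> f2 t" unfolding f2_def tb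
    using phi_conc[OF I1(3,4) uv P(2)] by simp
  have nn: "0 \<le> f1 s" "0 \<le> f2 s" for s unfolding f1_def f2_def using P by auto
  have X: "0 \<le> x1" "0 \<le> x2" "x1 \<le> Cap (f1 t1)" "x2 \<le> Cap (f2 t1)" "x1 + x2 \<le> Cap (f1 t1 + f2 t1)"
    using t1(2) unfolding xx G_def f1_def f2_def by auto
  have Y: "0 \<le> y1" "0 \<le> y2" "y1 \<le> Cap (f1 t2)" "y2 \<le> Cap (f2 t2)" "y1 + y2 \<le> Cap (f1 t2 + f2 t2)"
    using t2(2) unfolding yy G_def f1_def f2_def by auto
  have r1: "u * x1 + v * y1 \<le> Cap (f1 t)" using key[OF uv nn(1) nn(1) X(3) Y(3) c1] .
  have r2: "u * x2 + v * y2 \<le> Cap (f2 t)" using key[OF uv nn(2) nn(2) X(4) Y(4) c2] .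
  have c3: "u * (f1 t1 + f2 t1) + v * (f1 t2 + f2 t2) \<le> f1 t + f2 t" using c1 c2 by (simp add: algebra_simps)
  have r3: "u * (x1 + x2) + v * (y1 + y2) \<le> Cap (f1 t + f2 t)"
    using key[OF uv add_nonneg_nonneg[OF nn] add_nonneg_nonneg[OF nn] X(5) Y(5) c3] .
  have e: "u *\<^sub>R x + v *\<^sub>R y = (u * x1 + v * y1, u * x2 + v * y2)" by (simp add: xx yy)
  have "(u * x1 + v * y1) + (u * x2 + v * y2) = u * (x1 + x2) + v * (y1 + y2)" by (simp add: algebra_simps)
  then have r3': "(u * x1 + v * y1) + (u * x2 + v * y2) \<le> Cap (f1 t + f2 t)" using r3 by simp
  have p: "0 \<le> u * x1 + v * y1" "0 \<le> u * x2 + v * y2" using X Y uv by simp_all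
  have "u *\<^sub>R x + v *\<^sub>R y \<in> G (f1 t) (f2 t)"
    unfolding e G_def using p r1 r2 r3' by simp
  then show "u *\<^sub>R x + v *\<^sub>R y \<in> (\<Union>\<theta>\<in>{\<alpha>..\<beta>}. G (P1*(cos(\<theta>-\<alpha>))\<^sup>2) (P2*(cos(\<theta>-\<beta>))\<^sup>2))"
    using tI unfolding f1_def f2_def by blast
qed

lemma lhs_part:
  fixes h01 h02 u1 u2 w :: "real^'n" and PS1 PS2 N1 N2 \<alpha> \<beta> :: real
  assumes PS: "PS1 > 0" "PS2 > 0"
    and u: "norm u1 = 1" "norm u2 = 1" "u1 \<bullet> u2 = 0"
    and ab: "0 \<le> \<beta> - \<alpha>" "\<beta> - \<alpha> \<le> pi/2"
    and e1: "h01 = N1 *\<^sub>R (cos \<alpha> *\<^sub>R u1 + sin \<alpha> *\<^sub>R u2)"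
    and e2: "h02 = N2 *\<^sub>R (cos \<beta> *\<^sub>R u1 + sin \<beta> *\<^sub>R u2)"
    and w: "w \<noteq> 0"
  shows "\<exists>\<theta>\<in>{\<alpha>..\<beta>}. G (PS1*(w\<bullet>h01)\<^sup>2/(w\<bullet>w)) (PS2*(w\<bullet>h02)\<^sup>2/(w\<bullet>w))
           \<subseteq> G (N1\<^sup>2*PS1*(cos(\<theta>-\<alpha>))\<^sup>2) (N2\<^sup>2*PS2*(cos(\<theta>-\<beta>))\<^sup>2)"
proof -
  define f1 where "f1 = cos \<alpha> *\<^sub>R u1 + sin \<alpha> *\<^sub>R u2"
  define f2 where "f2 = cos \<beta> *\<^sub>R u1 + sin \<beta> *\<^sub>R u2"
  obtain t where t: "(w \<bullet> f1)\<^sup>2 \<le> (w \<bullet> w) * (cos (t - \<alpha>))\<^sup>2" "(w \<bullet> f2)\<^sup>2 \<le> (w \<bullet> w) * (cos (t - \<beta>))\<^sup>2"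
    using dir_bound[OF u f1_def f2_def, of w] by blast
  obtain t' where t': "t' \<in> {0..\<beta>-\<alpha>}" "(cos (t-\<alpha>))\<^sup>2 \<le> (cos t')\<^sup>2"
      "(cos ((t-\<alpha>)-(\<beta>-\<alpha>)))\<^sup>2 \<le> (cos (t'-(\<beta>-\<alpha>)))\<^sup>2"
    using dom[OF ab, of "t - \<alpha>"] by blast
  define \<theta> where "\<theta> = \<alpha> + t'"
  have \<theta>I: "\<theta> \<in> {\<alpha>..\<beta>}" using t'(1) unfolding \<theta>_def by simp
  have ww: "w \<bullet> w > 0" using w by simp
  have c1: "(cos (t-\<alpha>))\<^sup>2 \<le> (cos (\<theta>-\<alpha>))\<^sup>2" using t'(2) unfolding \<theta>_def by simp
  have "t - \<alpha> - (\<beta> - \<alpha>) = t - \<beta>" "t' - (\<beta> - \<alpha>) = \<theta> - \<beta>" unfolding \<theta>_def by simp_all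
  then have c2: "(cos (t-\<beta>))\<^sup>2 \<le> (cos (\<theta>-\<beta>))\<^sup>2" using t'(3) by metis
  have m1: "(w \<bullet> f1)\<^sup>2 \<le> (w \<bullet> w) * (cos (\<theta>-\<alpha>))\<^sup>2"
    using t(1) mult_left_mono[OF c1, of "w \<bullet> w"] ww by linarith
  have q1: "(w \<bullet> f1)\<^sup>2 / (w \<bullet> w) \<le> (cos (\<theta>-\<alpha>))\<^sup>2"
    using m1 by (subst pos_divide_le_eq[OF ww]) (simp add: mult.commute)
  have m2: "(w \<bullet> f2)\<^sup>2 \<le> (w \<bullet> w) * (cos (\<theta>-\<beta>))\<^sup>2"
    using t(2) mult_left_mono[OF c2, of "w \<bullet> w"] ww by linarith
  have q2: "(w \<bullet> f2)\<^sup>2 / (w \<bullet> w) \<le> (cos (\<theta>-\<beta>))\<^sup>2"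
    using m2 by (subst pos_divide_le_eq[OF ww]) (simp add: mult.commute)
  have E1: "PS1*(w\<bullet>h01)\<^sup>2/(w\<bullet>w) = (N1\<^sup>2*PS1) * ((w \<bullet> f1)\<^sup>2 / (w \<bullet> w))"
    unfolding e1 f1_def[symmetric] by (simp add: power_mult_distrib)
  have E2: "PS2*(w\<bullet>h02)\<^sup>2/(w\<bullet>w) = (N2\<^sup>2*PS2) * ((w \<bullet> f2)\<^sup>2 / (w \<bullet> w))"
    unfolding e2 f2_def[symmetric] by (simp add: power_mult_distrib)
  have "G (PS1*(w\<bullet>h01)\<^sup>2/(w\<bullet>w)) (PS2*(w\<bullet>h02)\<^sup>2/(w\<bullet>w))
           \<subseteq> G (N1\<^sup>2*PS1*(cos(\<theta>-\<alpha>))\<^sup>2) (N2\<^sup>2*PS2*(cos(\<theta>-\<beta>))\<^sup>2)"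
    unfolding E1 E2
  proof (rule G_mono)
    show "0 \<le> N1\<^sup>2 * PS1 * ((w \<bullet> f1)\<^sup>2 / (w \<bullet> w))" using PS ww by simp
    show "0 \<le> N2\<^sup>2 * PS2 * ((w \<bullet> f2)\<^sup>2 / (w \<bullet> w))" using PS ww by simp
    show "N1\<^sup>2 * PS1 * ((w \<bullet> f1)\<^sup>2 / (w \<bullet> w)) \<le> N1\<^sup>2 * PS1 * (cos (\<theta> - \<alpha>))\<^sup>2"
      using q1 PS by (intro mult_left_mono) auto
    show "N2\<^sup>2 * PS2 * ((w \<bullet> f2)\<^sup>2 / (w \<bullet> w)) \<le> N2\<^sup>2 * PS2 * (cos (\<theta> - \<beta>))\<^sup>2"
      using q2 PS by (intro mult_left_mono) auto
  qed
  then show ?thesis using \<theta>I by blast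
qed

lemma rhs_part:
  fixes h01 h02 h1 PUp u1 u2 :: "real^'n" and PS1 PS2 N1 N2 \<alpha> \<beta> \<theta> :: real
  assumes PS: "PS1 > 0" "PS2 > 0"
    and h1: "\<forall>k. h1 $ k > 0" and PUp: "\<forall>k. PUp $ k > 0"
    and u: "norm u1 = 1" "norm u2 = 1" "u1 \<bullet> u2 = 0"
    and e1: "h01 = N1 *\<^sub>R (cos \<alpha> *\<^sub>R u1 + sin \<alpha> *\<^sub>R u2)"
    and e2: "h02 = N2 *\<^sub>R (cos \<beta> *\<^sub>R u1 + sin \<beta> *\<^sub>R u2)"
  shows "\<exists>b. feasible PS1 PS2 h01 h02 PUp b \<and> diagm b *v h1 \<noteq> 0 \<and>
           Rout1 PS1 PS2 h01 h02 h1 b = G (N1\<^sup>2*PS1*(cos(\<theta>-\<alpha>))\<^sup>2) (N2\<^sup>2*PS2*(cos(\<theta>-\<beta>))\<^sup>2)"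
proof -
  define w0 where "w0 = cos \<theta> *\<^sub>R u1 + sin \<theta> *\<^sub>R u2"
  have uu: "u1 \<bullet> u1 = 1" "u2 \<bullet> u2 = 1" "u2 \<bullet> u1 = 0" using u by (simp_all add: dot_square_norm inner_commute)
  have w01: "w0 \<bullet> w0 = 1" unfolding w0_def
    by (simp add: inner_add_left inner_add_right uu u(3) power2_eq_square[symmetric])
  have w0h1: "w0 \<bullet> h01 = N1 * cos (\<theta> - \<alpha>)" unfolding w0_def e1
    by (simp add: inner_add_left inner_add_right uu u(3) cos_diff algebra_simps)
  have w0h2: "w0 \<bullet> h02 = N2 * cos (\<theta> - \<beta>)" unfolding w0_def e2
    by (simp add: inner_add_left inner_add_right uu u(3) cos_diff algebra_simps)
  define bU where "bU = betaUp PS1 PS2 h01 h02 PUp"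
  have bUpos: "bU k > 0" for k
  proof -
    have "0 < 1 + (h01 $ k)\<^sup>2 * PS1 + (h02 $ k)\<^sup>2 * PS2" using PS
      by (intro add_pos_nonneg) auto
    then show ?thesis unfolding bU_def betaUp_def using PUp by simp
  qed
  define f where "f k = bU k * h1 $ k / (\<bar>w0 $ k\<bar> + 1)" for k
  have fpos: "f k > 0" for k unfolding f_def using bUpos h1 by (intro divide_pos_pos mult_pos_pos) auto
  define \<tau> where "\<tau> = Min (range f)"
  have fin: "finite (range f)" by simp
  have \<tau>pos: "\<tau> > 0" unfolding \<tau>_def using fin fpos by (subst Min_gr_iff) auto
  have \<tau>le: "\<tau> \<le> f k" for k unfolding \<tau>_def using fin by (intro Min_le) auto
  define b where "b = (\<chi> k. \<tau> * w0 $ k / h1 $ k)"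
  have feas: "feasible PS1 PS2 h01 h02 PUp b"
    unfolding feasible_def bU_def[symmetric]
  proof
    fix k
    have hk: "h1 $ k > 0" using h1 by simp
    have "\<bar>b $ k\<bar> = \<tau> * \<bar>w0 $ k\<bar> / h1 $ k" unfolding b_def using hk \<tau>pos by (simp add: abs_mult)
    also have "\<dots> \<le> f k * \<bar>w0 $ k\<bar> / h1 $ k" using \<tau>le[of k] hk
      by (intro divide_right_mono mult_right_mono) auto
    also have "\<dots> = bU k * (\<bar>w0 $ k\<bar> / (\<bar>w0 $ k\<bar> + 1))" unfolding f_def using hk by simp
    also have "\<dots> \<le> bU k * 1" using bUpos[of k] by (intro mult_left_mono) auto
    finally show "\<bar>b $ k\<bar> \<le> bU k" by simp
  qed
  have bh: "diagm b *v h1 = \<tau> *\<^sub>R w0"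
    unfolding diagm_mv b_def using h1 by (simp add: vec_eq_iff less_imp_neq[symmetric])
  have nz: "diagm b *v h1 \<noteq> 0" unfolding bh using \<tau>pos w01 by auto
  have "Rout1 PS1 PS2 h01 h02 h1 b = G (PS1*((\<tau> *\<^sub>R w0)\<bullet>h01)\<^sup>2/((\<tau> *\<^sub>R w0)\<bullet>(\<tau> *\<^sub>R w0)))
                   (PS2*((\<tau> *\<^sub>R w0)\<bullet>h02)\<^sup>2/((\<tau> *\<^sub>R w0)\<bullet>(\<tau> *\<^sub>R w0)))"
    by (rule Rout1_G[OF bh[symmetric]])
  also have "\<dots> = G (N1\<^sup>2*PS1*(cos(\<theta>-\<alpha>))\<^sup>2) (N2\<^sup>2*PS2*(cos(\<theta>-\<beta>))\<^sup>2)"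
    using \<tau>pos by (simp add: w01 w0h1 w0h2 power_mult_distrib power2_eq_square ac_simps)
  finally show ?thesis using feas nz by blast
qed

theorem theorem5:
  fixes PS1 PS2 :: real and h01 h02 h1 PUp u1 u2 :: "real ^ 'n" and \<alpha> \<beta> :: real
  assumes PS1: "PS1 > 0" and PS2: "PS2 > 0"
    and h01: "\<forall>k. h01 $ k > 0" and h02: "\<forall>k. h02 $ k > 0" and h1: "\<forall>k. h1 $ k > 0"
    and PUp: "\<forall>k. PUp $ k > 0"
    and u1: "norm u1 = 1" and u2: "norm u2 = 1" and u12: "u1 \<bullet> u2 = 0"
    and ab: "0 \<le> \<alpha>" "\<alpha> \<le> \<beta>" "\<beta> \<le> pi / 2"
    and d1: "h01 /\<^sub>R norm h01 = cos \<alpha> *\<^sub>R u1 + sin \<alpha> *\<^sub>R u2"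
    and d2: "h02 /\<^sub>R norm h02 = cos \<beta> *\<^sub>R u1 + sin \<beta> *\<^sub>R u2"
  shows "(\<Union>b \<in> {b. feasible PS1 PS2 h01 h02 PUp b \<and> diagm b *v h1 \<noteq> 0}.
            Rout1 PS1 PS2 h01 h02 h1 b)
         = (\<Union>\<theta> \<in> {\<alpha>..\<beta>}. Rtheta ((norm h01)\<^sup>2 * PS1) ((norm h02)\<^sup>2 * PS2) \<alpha> \<beta> \<theta>)
       \<and> (arccos ((h01 /\<^sub>R norm h01) \<bullet> (h02 /\<^sub>R norm h02)) \<le> pi / 4 \<longrightarrow>
          convex (\<Union>\<theta> \<in> {\<alpha>..\<beta>}. Rtheta ((norm h01)\<^sup>2 * PS1) ((norm h02)\<^sup>2 * PS2) \<alpha> \<beta> \<theta>))"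
proof -
  obtain k0 :: 'n where True by simp
  have "h01 $ k0 \<noteq> 0" using h01 by (metis less_irrefl)
  then have "h01 \<noteq> 0" by (metis zero_index)
  then have n1: "norm h01 > 0" by simp
  have "h02 $ k0 \<noteq> 0" using h02 by (metis less_irrefl)
  then have "h02 \<noteq> 0" by (metis zero_index)
  then have n2: "norm h02 > 0" by simp
  have e1: "h01 = norm h01 *\<^sub>R (cos \<alpha> *\<^sub>R u1 + sin \<alpha> *\<^sub>R u2)"
    using d1 n1 by (metis divideR_right less_irrefl)
  have e2: "h02 = norm h02 *\<^sub>R (cos \<beta> *\<^sub>R u1 + sin \<beta> *\<^sub>R u2)"
    using d2 n2 by (metis divideR_right less_irrefl)
  have dd: "0 \<le> \<beta> - \<alpha>" "\<beta> - \<alpha> \<le> pi/2" using ab by auto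
  have RG: "(\<Union>\<theta> \<in> {\<alpha>..\<beta>}. Rtheta ((norm h01)\<^sup>2 * PS1) ((norm h02)\<^sup>2 * PS2) \<alpha> \<beta> \<theta>)
      = (\<Union>\<theta> \<in> {\<alpha>..\<beta>}. G ((norm h01)\<^sup>2 * PS1 * (cos(\<theta>-\<alpha>))\<^sup>2) ((norm h02)\<^sup>2 * PS2 * (cos(\<theta>-\<beta>))\<^sup>2))"
    by (simp add: Rtheta_G)
  have part1: "(\<Union>b \<in> {b. feasible PS1 PS2 h01 h02 PUp b \<and> diagm b *v h1 \<noteq> 0}.
            Rout1 PS1 PS2 h01 h02 h1 b)
         = (\<Union>\<theta> \<in> {\<alpha>..\<beta>}. Rtheta ((norm h01)\<^sup>2 * PS1) ((norm h02)\<^sup>2 * PS2) \<alpha> \<beta> \<theta>)"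
    unfolding RG
  proof (rule subset_antisym)
    show "(\<Union>b \<in> {b. feasible PS1 PS2 h01 h02 PUp b \<and> diagm b *v h1 \<noteq> 0}. Rout1 PS1 PS2 h01 h02 h1 b)
      \<subseteq> (\<Union>\<theta> \<in> {\<alpha>..\<beta>}. G ((norm h01)\<^sup>2 * PS1 * (cos(\<theta>-\<alpha>))\<^sup>2) ((norm h02)\<^sup>2 * PS2 * (cos(\<theta>-\<beta>))\<^sup>2))"
    proof (rule UN_least)
      fix b assume "b \<in> {b. feasible PS1 PS2 h01 h02 PUp b \<and> diagm b *v h1 \<noteq> 0}"
      then have w: "diagm b *v h1 \<noteq> 0" by simp
      obtain \<theta> where "\<theta> \<in> {\<alpha>..\<beta>}"
        "G (PS1*((diagm b *v h1)\<bullet>h01)\<^sup>2/((diagm b *v h1)\<bullet>(diagm b *v h1)))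
           (PS2*((diagm b *v h1)\<bullet>h02)\<^sup>2/((diagm b *v h1)\<bullet>(diagm b *v h1)))
         \<subseteq> G ((norm h01)\<^sup>2*PS1*(cos(\<theta>-\<alpha>))\<^sup>2) ((norm h02)\<^sup>2*PS2*(cos(\<theta>-\<beta>))\<^sup>2)"
        using lhs_part[OF PS1 PS2 u1 u2 u12 dd e1 e2 w] by blast
      then show "Rout1 PS1 PS2 h01 h02 h1 b \<subseteq> (\<Union>\<theta> \<in> {\<alpha>..\<beta>}. G ((norm h01)\<^sup>2 * PS1 * (cos(\<theta>-\<alpha>))\<^sup>2) ((norm h02)\<^sup>2 * PS2 * (cos(\<theta>-\<beta>))\<^sup>2))"
        unfolding Rout1_G[OF refl] by blast
    qed
  next
    show "(\<Union>\<theta> \<in> {\<alpha>..\<beta>}. G ((norm h01)\<^sup>2 * PS1 * (cos(\<theta>-\<alpha>))\<^sup>2) ((norm h02)\<^sup>2 * PS2 * (cos(\<theta>-\<beta>))\<^sup>2))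
      \<subseteq> (\<Union>b \<in> {b. feasible PS1 PS2 h01 h02 PUp b \<and> diagm b *v h1 \<noteq> 0}. Rout1 PS1 PS2 h01 h02 h1 b)"
    proof (rule UN_least)
      fix \<theta> assume "\<theta> \<in> {\<alpha>..\<beta>}"
      obtain b where "feasible PS1 PS2 h01 h02 PUp b" "diagm b *v h1 \<noteq> 0"
        "Rout1 PS1 PS2 h01 h02 h1 b = G ((norm h01)\<^sup>2*PS1*(cos(\<theta>-\<alpha>))\<^sup>2) ((norm h02)\<^sup>2*PS2*(cos(\<theta>-\<beta>))\<^sup>2)"
        using rhs_part[OF PS1 PS2 h1 PUp u1 u2 u12 e1 e2, of \<theta>] by blast
      then show "G ((norm h01)\<^sup>2 * PS1 * (cos(\<theta>-\<alpha>))\<^sup>2) ((norm h02)\<^sup>2 * PS2 * (cos(\<theta>-\<beta>))\<^sup>2)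
        \<subseteq> (\<Union>b \<in> {b. feasible PS1 PS2 h01 h02 PUp b \<and> diagm b *v h1 \<noteq> 0}. Rout1 PS1 PS2 h01 h02 h1 b)"
        by blast
    qed
  qed
  have part2: "arccos ((h01 /\<^sub>R norm h01) \<bullet> (h02 /\<^sub>R norm h02)) \<le> pi / 4 \<longrightarrow>
          convex (\<Union>\<theta> \<in> {\<alpha>..\<beta>}. Rtheta ((norm h01)\<^sup>2 * PS1) ((norm h02)\<^sup>2 * PS2) \<alpha> \<beta> \<theta>)"
  proof
    assume ac: "arccos ((h01 /\<^sub>R norm h01) \<bullet> (h02 /\<^sub>R norm h02)) \<le> pi / 4"
    have uu: "u1 \<bullet> u1 = 1" "u2 \<bullet> u2 = 1" "u2 \<bullet> u1 = 0" using u1 u2 u12 by (simp_all add: dot_square_norm inner_commute)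
    have "(h01 /\<^sub>R norm h01) \<bullet> (h02 /\<^sub>R norm h02) = cos (\<beta> - \<alpha>)" unfolding d1 d2
      by (simp add: inner_add_left inner_add_right uu u12 cos_diff algebra_simps)
    moreover have "arccos (cos (\<beta> - \<alpha>)) = \<beta> - \<alpha>" using dd by (intro arccos_cos) auto
    ultimately have "\<beta> - \<alpha> \<le> pi/4" using ac by simp
    then show "convex (\<Union>\<theta> \<in> {\<alpha>..\<beta>}. Rtheta ((norm h01)\<^sup>2 * PS1) ((norm h02)\<^sup>2 * PS2) \<alpha> \<beta> \<theta>)"
      unfolding RG using PS1 PS2 ab by (intro union_convex) auto
  qed
  show ?thesis using part1 part2 by blast
qed






end
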